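(* Let $X$ be a real Hilbert space, let $L\colon X\to X$ be linear and nonexpansive, let $b\in X$, and let $T\colon X\to X\colon x\mapsto Lx+b$. Let $v:=P_{\overline{\operatorname{ran}}(\mathrm{Id}-T)}0$ and suppose $v\in\operatorname{ran}(\mathrm{Id}-T)$. Let $x\in X$. Then: (i) $v=P_{\operatorname{Fix}L}(-b)\in\operatorname{Fix}L=(\operatorname{ran}(\mathrm{Id}-L))^\perp$, and $v\neq0\iff b\notin\operatorname{ran}(\mathrm{Id}-L)$; (ii) for all $n\in\mathbb N$, $T^nx=L^nx+\sum_{k=0}^{n-1}L^kb$; (iii) for all $n\in\mathbb N$, $T^nx+nv=L^nx+\sum_{k=0}^{n-1}L^kP_{\overline{\operatorname{ran}}(\mathrm{Id}-L)}b$; (iv) for all $n\in\mathbb N$, $(T_{-v})^nx=T^nx+nv$; (v) for all $n\in\mathbb N$, $(T_{-v})^nx=(v+T)^nx$; (vi) $\operatorname{Fix}(T_{-v})=-v+\operatorname{Fix}(T_{-v})=-v+\operatorname{Fix}(v+T)=\operatorname{Fix}(v+T)$; (vii) $\operatorname{Fix}(T_{-v})=\operatorname{Fix}(v+T)=\mathbb Rv+\operatorname{Fix}(v+T)=\mathbb Rv+\operatorname{Fix}(T_{-v})$; consequently $v$ lies in the lineality space of the affine subspace $\operatorname{Fix}(T_{-v})=\operatorname{Fix}(v+T)$.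
   Context: $\overline{\operatorname{ran}}(\mathrm{Id}-T)$ is the closure of the range of $\mathrm{Id}-T$ (a closed convex set, so $v$ is well-defined). $T_{-v}x:=T(x+v)$ and $(v+T)x:=v+Tx$. $\operatorname{Fix}$ denotes the fixed point set, $P_C$ the projection onto a closed convex set $C$. The lineality space of a convex set $C$ is the set of $d$ with $C+\mathbb Rd=C$. *)

theory Defs
  imports "HOL-Analysis.Analysis"
begin

text \<open>Metric projection onto a set C (meant for nonempty closed convex C in a real
Hilbert space, where the nearest point exists and is unique).  The library's
closest_point needs heine_borel, i.e. finite dimension, so we define it here.\<close>
definition proj :: "'a::real_inner set \<Rightarrow> 'a \<Rightarrow> 'a" where
  "proj C a = (THE p. p \<in> C \<and> (\<forall>y\<in>C. dist a p \<le> dist a y))"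

definition Fix :: "('a \<Rightarrow> 'a) \<Rightarrow> 'a set" where
  "Fix f = {x. f x = x}"

definition lineality_space :: "'a::real_vector set \<Rightarrow> 'a set" where
  "lineality_space C = {d. {c + t *\<^sub>R d | c t. c \<in> C} = C}"

end

theory Submission imports Defs begin

lemma quad_zero:
  fixes a c :: real
  assumes h: "\<And>t. 0 \<le> 2*t*a + t^2*c" and c: "0 \<le> c"
  shows "a = 0"
proof -
  define t where "t = - a/(c+1)"
  have c1: "c + 1 > 0" using c by simp
  have "0 \<le> 2*t*a + t^2*c" by (rule h)
  hence "0 \<le> (2*t*a + t^2*c) * (c+1)^2" using c1 by simp
  also have "(2*t*a + t^2*c) * (c+1)^2 = 2*a*(t*(c+1))*(c+1) + (t*(c+1))^2*c"
    by (simp add: power2_eq_square algebra_simps)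
  also have "t*(c+1) = -a" using c1 unfolding t_def by simp
  also have "2*a*(-a)*(c+1) + (-a)^2*c = -(a^2 * (c+2))"
    by (simp add: power2_eq_square algebra_simps)
  finally have "a^2 * (c+2) \<le> 0" by simp
  moreover have "c + 2 > 0" using c by simp
  ultimately have "a^2 \<le> 0" by (simp add: mult_le_0_iff)
  thus ?thesis by simp
qed

lemma perp_of_min:
  fixes u w :: "'a::real_inner"
  assumes "\<And>t::real. norm u \<le> norm (u + t *\<^sub>R w)"
  shows "inner u w = 0"
proof (rule quad_zero[where c="(norm w)^2"])
  fix t :: real
  have "(norm u)^2 \<le> (norm (u + t *\<^sub>R w))^2"
    using assms[of t] by (simp add: power_mono)
  also have "(norm (u + t *\<^sub>R w))^2 = (norm u)^2 + 2*t*inner u w + t^2*(norm w)^2"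
    by (simp only: power2_norm_eq_inner) (simp add: inner_add_left inner_add_right inner_commute power2_eq_square algebra_simps)
  finally show "0 \<le> 2*t*inner u w + t^2*(norm w)^2" by simp
qed simp

lemma proj_eq:
  fixes C :: "'a::real_inner set"
  assumes "convex C" "closed C" "p \<in> C" "\<forall>y\<in>C. dist a p \<le> dist a y"
  shows "proj C a = p"
  unfolding proj_def
proof (rule the_equality)
  show "p \<in> C \<and> (\<forall>y\<in>C. dist a p \<le> dist a y)" using assms by blast
next
  fix q assume "q \<in> C \<and> (\<forall>y\<in>C. dist a q \<le> dist a y)"
  then show "q = p" using any_closest_point_unique[OF assms(1,2), of q p a] assms by blast
qed

lemma dist_le_of_orth:
  fixes a p y :: "'a::real_inner"
  assumes "inner (a - p) (p - y) = 0"
  shows "dist a p \<le> dist a y"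
proof -
  have "(norm (a - y))^2 = (norm (a - p))^2 + (norm (p - y))^2"
    using norm_add_Pythagorean[of "a - p" "p - y"] assms by (simp add: orthogonal_def)
  hence "(norm (a - p))^2 \<le> (norm (a - y))^2" by simp
  hence "norm (a - p) \<le> norm (a - y)" by (rule power2_le_imp_le) simp
  thus ?thesis by (simp add: dist_norm)
qed

lemma hilbert_exists:
  fixes C :: "'a::{real_inner,complete_space} set"
  assumes cv: "convex C" and cl: "closed C" and ne: "C \<noteq> {}"
  shows "\<exists>p\<in>C. \<forall>y\<in>C. dist a p \<le> dist a y"
proof -
  define d where "d = Inf (dist a ` C)"
  have bdd: "bdd_below (dist a ` C)" by (rule bdd_belowI[of _ 0]) auto
  have dle: "d \<le> dist a y" if "y \<in> C" for y
    unfolding d_def using bdd that by (simp add: cInf_lower)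
  have d0: "0 \<le> d" unfolding d_def by (rule cInf_greatest) (use ne in auto)
  have "\<exists>y\<in>C. dist a y < d + 1/(real n+1)" for n
  proof (rule ccontr)
    assume "\<not> ?thesis"
    hence "\<forall>y\<in>C. d + 1/(real n+1) \<le> dist a y" by auto
    hence "d + 1/(real n+1) \<le> d" unfolding d_def by (rule_tac cInf_greatest) (use ne in auto)
    moreover have "0 < 1/(real n+1)" by simp
    ultimately show False by linarith
  qed
  then obtain f where fC: "\<And>n. f n \<in> C" and fd: "\<And>n. dist a (f n) < d + 1/(real n+1)"
    by metis
  have sq: "(dist a (f n))^2 - d^2 \<le> (2*d+1)/(real n+1)" for n
  proof -
    have e0: "d \<le> dist a (f n)" using dle fC by blast
    have "(dist a (f n))^2 - d^2 = (dist a (f n) - d) * (dist a (f n) + d)"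
      by (simp add: power2_eq_square algebra_simps)
    also have "\<dots> \<le> (1/(real n+1)) * (2*d + 1)"
    proof (rule mult_mono)
      show "dist a (f n) - d \<le> 1/(real n+1)" using fd[of n] by simp
      have "1/(real n+1) \<le> 1" by simp
      thus "dist a (f n) + d \<le> 2*d+1" using fd[of n] by linarith
    qed (use e0 d0 in auto)
    finally show ?thesis by simp
  qed
  have para: "(dist (f n) (f m))^2 \<le> 2*(2*d+1)*(1/(real n+1) + 1/(real m+1))" for n m
  proof -
    let ?x = "a - f n" and ?y = "a - f m"
    have mid: "(1/2) *\<^sub>R f n + (1/2) *\<^sub>R f m \<in> C"
      using cv fC unfolding convex_def by (metis add_divide_distrib divide_self_if one_add_one zero_le_divide_1_iff zero_le_numeral zero_neq_numeral)
    have "d \<le> dist a ((1/2) *\<^sub>R f n + (1/2) *\<^sub>R f m)" using dle mid by blast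
    hence "d^2 \<le> (norm (a - ((1/2) *\<^sub>R f n + (1/2) *\<^sub>R f m)))^2"
      using d0 by (simp add: dist_norm power_mono)
    also have "a - ((1/2) *\<^sub>R f n + (1/2) *\<^sub>R f m) = (1/2) *\<^sub>R (?x + ?y)"
      by (metis (no_types, lifting) add_diff_add scaleR_half_double scaleR_right_diff_distrib scaleR_right_distrib)
    finally have m4: "4*d^2 \<le> (norm (?x + ?y))^2"
      by (simp add: power2_eq_square)
    have pl: "(norm (?x + ?y))^2 + (norm (?x - ?y))^2 = 2*(norm ?x)^2 + 2*(norm ?y)^2"
      by (simp add: power2_norm_eq_inner inner_add_left inner_add_right inner_diff_left inner_diff_right inner_commute)
    have "?x - ?y = f m - f n" by simp
    hence "(dist (f n) (f m))^2 = (norm (?x - ?y))^2" by (simp add: dist_norm norm_minus_commute)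
    also have "\<dots> \<le> 2*((dist a (f n))^2 - d^2) + 2*((dist a (f m))^2 - d^2)"
      using pl m4 by (simp add: dist_norm)
    also have "\<dots> \<le> 2*((2*d+1)/(real n+1)) + 2*((2*d+1)/(real m+1))"
      using sq[of n] sq[of m] by (intro add_mono mult_left_mono) auto
    finally show ?thesis by (simp add: algebra_simps add_divide_distrib)
  qed
  have "Cauchy f"
  proof (rule metric_CauchyI)
    fix e :: real assume e: "e > 0"
    obtain N :: nat where N: "4*(2*d+1)/(e^2) < real N" using reals_Archimedean2 by blast
    have NN: "4*(2*d+1) < e^2 * (real N + 1)"
    proof -
      have "4*(2*d+1) < real N * e^2" using N e by (simp add: field_simps)
      moreover have "0 < e^2" using e by simp
      moreover have "e^2*(real N+1) = real N * e^2 + e^2" by (simp add: algebra_simps)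
      ultimately show ?thesis by linarith
    qed
    show "\<exists>M. \<forall>m\<ge>M. \<forall>n\<ge>M. dist (f m) (f n) < e"
    proof (intro exI allI impI)
      fix m n assume mN: "m \<ge> N" and nN: "n \<ge> N"
      have "1/(real m+1) \<le> 1/(real N+1)" using mN by (simp add: frac_le)
      moreover have "1/(real n+1) \<le> 1/(real N+1)" using nN by (simp add: frac_le)
      ultimately have "1/(real m+1) + 1/(real n+1) \<le> 2/(real N+1)" by simp
      hence "2*(2*d+1)*(1/(real m+1) + 1/(real n+1)) \<le> 2*(2*d+1)*(2/(real N+1))"
        using d0 by (intro mult_left_mono) auto
      hence "(dist (f m) (f n))^2 \<le> 2*(2*d+1)*(2/(real N+1))"
        using para[of m n] by linarith
      also have "\<dots> < e^2" using NN by (simp add: field_simps)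
      finally have "(dist (f m) (f n))^2 < e^2" .
      thus "dist (f m) (f n) < e" using e by (simp add: power_less_imp_less_base)
    qed
  qed
  then obtain p where lim: "f \<longlonglongrightarrow> p" using Cauchy_convergent convergent_def by blast
  have pC: "p \<in> C" using cl fC lim closed_sequentially by blast
  have l1: "(\<lambda>n. dist a (f n)) \<longlonglongrightarrow> dist a p" by (intro tendsto_intros lim)
  have l2: "(\<lambda>n. dist a (f n)) \<longlonglongrightarrow> d"
  proof (rule real_tendsto_sandwich[where f="\<lambda>n. d" and h="\<lambda>n. d + 1/(real n+1)"])
    show "\<forall>\<^sub>F n in sequentially. d \<le> dist a (f n)" using dle fC by (intro always_eventually allI) auto
    show "\<forall>\<^sub>F n in sequentially. dist a (f n) \<le> d + 1/(real n+1)" using fd by (intro always_eventually allI less_imp_le) auto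
    show "(\<lambda>n. d) \<longlonglongrightarrow> d" by simp
    have "(\<lambda>n. 1/(real n+1)) \<longlonglongrightarrow> 0" using LIMSEQ_inverse_real_of_nat by (simp add: inverse_eq_divide add.commute)
    thus "(\<lambda>n. d + 1/(real n+1)) \<longlonglongrightarrow> d" using tendsto_add[of "\<lambda>n. d" d] by fastforce
  qed
  have "dist a p = d" using LIMSEQ_unique[OF l1 l2] .
  thus ?thesis using pC dle by auto
qed

lemma funpow_add_lin:
  fixes L :: "'a::real_vector \<Rightarrow> 'a"
  assumes "linear L"
  shows "(L ^^ k) (x + y) = (L ^^ k) x + (L ^^ k) y"
  by (induction k) (simp_all add: linear_add[OF assms])

lemma funpow_fix:
  assumes "L v = v"
  shows "(L ^^ k) v = v"
  by (induction k) (simp_all add: assms)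

theorem theorem3p2:
  fixes L :: "'a::{real_inner, complete_space} \<Rightarrow> 'a" and b x :: 'a
    and T :: "'a \<Rightarrow> 'a" and v :: 'a
  assumes lin: "linear L"
    and nonexp: "\<forall>y z. norm (L y - L z) \<le> norm (y - z)"
    and T_def: "T = (\<lambda>y. L y + b)"
    and v_def: "v = proj (closure (range (\<lambda>y. y - T y))) 0"
    and v_ran: "v \<in> range (\<lambda>y. y - T y)"
  shows
    "(v = proj (Fix L) (- b) \<and> v \<in> Fix L
        \<and> Fix L = orthogonal_comp (range (\<lambda>y. y - L y))
        \<and> (v \<noteq> 0 \<longleftrightarrow> b \<notin> range (\<lambda>y. y - L y)))
     \<and> (\<forall>n. (T ^^ n) x = (L ^^ n) x + (\<Sum>k<n. (L ^^ k) b))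
     \<and> (\<forall>n. (T ^^ n) x + real n *\<^sub>R v
            = (L ^^ n) x + (\<Sum>k<n. (L ^^ k) (proj (closure (range (\<lambda>y. y - L y))) b)))
     \<and> (\<forall>n. ((\<lambda>y. T (y + v)) ^^ n) x = (T ^^ n) x + real n *\<^sub>R v)
     \<and> (\<forall>n. ((\<lambda>y. T (y + v)) ^^ n) x = ((\<lambda>y. v + T y) ^^ n) x)
     \<and> (Fix (\<lambda>y. T (y + v)) = (\<lambda>y. - v + y) ` Fix (\<lambda>y. T (y + v))
        \<and> (\<lambda>y. - v + y) ` Fix (\<lambda>y. T (y + v)) = (\<lambda>y. - v + y) ` Fix (\<lambda>y. v + T y)
        \<and> (\<lambda>y. - v + y) ` Fix (\<lambda>y. v + T y) = Fix (\<lambda>y. v + T y))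
     \<and> (Fix (\<lambda>y. T (y + v)) = Fix (\<lambda>y. v + T y)
        \<and> Fix (\<lambda>y. v + T y) = {t *\<^sub>R v + y | t y. y \<in> Fix (\<lambda>y. v + T y)}
        \<and> {t *\<^sub>R v + y | t y. y \<in> Fix (\<lambda>y. v + T y)} = {t *\<^sub>R v + y | t y. y \<in> Fix (\<lambda>y. T (y + v))}
        \<and> affine (Fix (\<lambda>y. T (y + v)))
        \<and> v \<in> lineality_space (Fix (\<lambda>y. T (y + v))))"
proof -
  note ladd = linear_add[OF lin] and lscale = linear_scale[OF lin]
    and l0 = linear_0[OF lin] and ldiff = linear_diff[OF lin]
  define Rg where "Rg = range (\<lambda>y. y - L y)"
  define S where "S = closure Rg"
  define R where "R = range (\<lambda>y. y - T y)"
  have subRg: "subspace Rg"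
    unfolding subspace_def Rg_def
  proof (intro conjI ballI allI)
    show "0 \<in> range (\<lambda>y. y - L y)" using l0 by (metis diff_zero rangeI)
  next
    fix p q assume "p \<in> range (\<lambda>y. y - L y)" "q \<in> range (\<lambda>y. y - L y)"
    then obtain y z where "p = y - L y" "q = z - L z" by auto
    hence "p + q = (y + z) - L (y + z)" by (simp add: ladd)
    thus "p + q \<in> range (\<lambda>y. y - L y)" by blast
  next
    fix c :: real and p assume "p \<in> range (\<lambda>y. y - L y)"
    then obtain y where "p = y - L y" by auto
    hence "c *\<^sub>R p = (c *\<^sub>R y) - L (c *\<^sub>R y)" by (simp add: lscale scaleR_diff_right)
    thus "c *\<^sub>R p \<in> range (\<lambda>y. y - L y)" by blast
  qed
  have R_eq: "R = (\<lambda>s. s - b) ` Rg"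
    unfolding R_def Rg_def T_def by (auto simp: image_iff algebra_simps)
  have clR: "closure R = (\<lambda>s. s - b) ` S"
    unfolding R_eq S_def by (rule closure_translation_subtract)
  have convS: "convex S" unfolding S_def using subRg by (simp add: subspace_imp_convex)
  have closedS: "closed S" unfolding S_def by simp
  have convR: "convex (closure R)" unfolding clR using convS by (rule convex_translation_subtract)
  have neR: "closure R \<noteq> {}" unfolding R_def by simp
  obtain p where pR: "p \<in> closure R" and pmin: "\<forall>y\<in>closure R. dist 0 p \<le> dist 0 y"
    using hilbert_exists[OF convR closed_closure neR] by blast
  have vp: "v = p" unfolding v_def R_def[symmetric]
    using proj_eq[OF convR closed_closure pR pmin] .
  have vR: "v \<in> closure R" using vp pR by simp
  have vmin: "\<And>y. y \<in> closure R \<Longrightarrow> norm v \<le> norm y" using vp pmin by simp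
  obtain s0 where s0: "s0 \<in> S" "v = s0 - b" using vR clR by auto
  have Sadd: "s + w \<in> S" if "s \<in> S" "w \<in> Rg" for s w
  proof -
    have "(+) w ` Rg \<subseteq> Rg" using subRg that(2) by (auto intro: subspace_add)
    hence "closure ((+) w ` Rg) \<subseteq> S" unfolding S_def by (rule closure_mono)
    hence "(+) w ` S \<subseteq> S" unfolding S_def closure_translation .
    thus ?thesis using that(1) by (auto simp: add.commute)
  qed
  have vperp: "inner v w = 0" if "w \<in> Rg" for w
  proof (rule perp_of_min)
    fix t :: real
    have "t *\<^sub>R w \<in> Rg" using subRg that by (rule subspace_scale)
    hence "s0 + t *\<^sub>R w \<in> S" using Sadd s0(1) by blast
    hence "(s0 + t *\<^sub>R w) - b \<in> closure R" unfolding clR by blast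
    moreover have "(s0 + t *\<^sub>R w) - b = v + t *\<^sub>R w" using s0(2) by simp
    ultimately show "norm v \<le> norm (v + t *\<^sub>R w)" using vmin by simp
  qed
  have FixL: "Fix L = orthogonal_comp Rg"
  proof
    show "Fix L \<subseteq> orthogonal_comp Rg"
    proof
      fix y assume "y \<in> Fix L"
      hence Ly: "L y = y" by (simp add: Fix_def)
      have "inner y (z - L z) = 0" for z
      proof (rule quad_zero[where c="(norm z)^2 - (norm (L z))^2"])
        fix t :: real
        have "norm (L (y + t *\<^sub>R z) - L 0) \<le> norm (y + t *\<^sub>R z - 0)" using nonexp by blast
        hence "norm (y + t *\<^sub>R L z) \<le> norm (y + t *\<^sub>R z)" by (simp add: ladd lscale l0 Ly)
        hence "(norm (y + t *\<^sub>R L z))^2 \<le> (norm (y + t *\<^sub>R z))^2" by (simp add: power_mono)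
        moreover have "(norm (y + t *\<^sub>R L z))^2 = (norm y)^2 + 2*t*inner y (L z) + t^2*(norm (L z))^2"
          by (simp only: power2_norm_eq_inner) (simp add: inner_add_left inner_add_right inner_commute power2_eq_square algebra_simps)
        moreover have "(norm (y + t *\<^sub>R z))^2 = (norm y)^2 + 2*t*inner y z + t^2*(norm z)^2"
          by (simp only: power2_norm_eq_inner) (simp add: inner_add_left inner_add_right inner_commute power2_eq_square algebra_simps)
        ultimately show "0 \<le> 2*t*inner y (z - L z) + t^2*((norm z)^2 - (norm (L z))^2)"
          by (simp add: inner_diff_right algebra_simps)
      next
        have "norm (L z - L 0) \<le> norm (z - 0)" using nonexp by blast
        hence "norm (L z) \<le> norm z" by (simp add: l0)
        thus "0 \<le> (norm z)^2 - (norm (L z))^2" by (simp add: power_mono)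
      qed
      thus "y \<in> orthogonal_comp Rg"
        unfolding orthogonal_comp_def orthogonal_def Rg_def by (auto simp: inner_commute)
    qed
  next
    show "orthogonal_comp Rg \<subseteq> Fix L"
    proof
      fix y assume "y \<in> orthogonal_comp Rg"
      hence "inner (y - L y) y = 0" unfolding orthogonal_comp_def orthogonal_def Rg_def by auto
      hence "inner y y - inner (L y) y = 0" by (simp add: inner_diff_left)
      hence iy: "inner y (L y) = inner y y" by (simp add: inner_commute)
      have "norm (L y - L 0) \<le> norm (y - 0)" using nonexp by blast
      hence "norm (L y) \<le> norm y" by (simp add: l0)
      hence "(norm (L y))^2 \<le> (norm y)^2" by (simp add: power_mono)
      moreover have "(norm (y - L y))^2 = (norm y)^2 - 2*inner y (L y) + (norm (L y))^2"
        by (simp only: power2_norm_eq_inner) (simp add: inner_diff_left inner_diff_right inner_commute algebra_simps)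
      ultimately have "(norm (y - L y))^2 \<le> 0" using iy by (simp add: power2_norm_eq_inner)
      hence "y - L y = 0" by simp
      thus "y \<in> Fix L" by (simp add: Fix_def)
    qed
  qed
  have vFix: "v \<in> Fix L" unfolding FixL orthogonal_comp_def orthogonal_def
    using vperp by (auto simp: inner_commute)
  have Lv: "L v = v" using vFix by (simp add: Fix_def)
  have FixS: "inner s y = 0" if "y \<in> Fix L" "s \<in> S" for y s
  proof -
    have "Rg \<subseteq> {s. inner y s = 0}" using that(1) unfolding FixL orthogonal_comp_def orthogonal_def
      by (auto simp: inner_commute)
    hence "S \<subseteq> {s. inner y s = 0}" unfolding S_def by (rule closure_minimal) (rule closed_hyperplane)
    thus ?thesis using that(2) by (auto simp: inner_commute)
  qed
  have subFix: "subspace (Fix L)" unfolding FixL by (rule subspace_orthogonal_comp)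
  have closedFix: "closed (Fix L)"
  proof -
    have "Fix L = (\<Inter>w\<in>Rg. {x. inner w x = 0})" unfolding FixL orthogonal_comp_def orthogonal_def by auto
    thus ?thesis by (auto intro!: closed_INT closed_hyperplane)
  qed
  have i1: "v = proj (Fix L) (- b)"
  proof (rule proj_eq[symmetric, OF subspace_imp_convex[OF subFix] closedFix vFix], intro ballI)
    fix y assume y: "y \<in> Fix L"
    have "v - y \<in> Fix L" using subFix vFix y by (rule subspace_diff)
    hence "inner s0 (v - y) = 0" using FixS s0(1) by blast
    moreover have "- b - v = - s0" using s0(2) by simp
    ultimately show "dist (- b) v \<le> dist (- b) y" by (intro dist_le_of_orth) simp
  qed
  have i4: "v \<noteq> 0 \<longleftrightarrow> b \<notin> Rg"
  proof
    assume "v \<noteq> 0" 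
    show "b \<notin> Rg"
    proof
      assume "b \<in> Rg"
      then obtain z where "b = z - L z" unfolding Rg_def by auto
      hence "0 = z - T z" unfolding T_def by simp
      hence "0 \<in> closure R" unfolding R_def by (metis closure_subset rangeI subsetD)
      hence "norm v \<le> 0" using vmin by fastforce
      thus False using \<open>v \<noteq> 0\<close> by simp
    qed
  next
    assume "b \<notin> Rg"
    show "v \<noteq> 0"
    proof
      assume "v = 0"
      then obtain w where "0 = w - T w" using v_ran by auto
      hence "b = w - L w" unfolding T_def by (simp add: algebra_simps)
      thus False using \<open>b \<notin> Rg\<close> unfolding Rg_def by auto
    qed
  qed
  have ii: "(T ^^ n) x = (L ^^ n) x + (\<Sum>k<n. (L ^^ k) b)" for n
  proof (induction n)
    case 0 show ?case by simp
  next
    case (Suc n)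
    have "(T ^^ Suc n) x = L ((L ^^ n) x + (\<Sum>k<n. (L ^^ k) b)) + b"
      using Suc by (simp add: T_def)
    also have "\<dots> = (L ^^ Suc n) x + ((\<Sum>k<n. (L ^^ Suc k) b) + b)"
      by (simp add: ladd linear_sum[OF lin])
    also have "(\<Sum>k<n. (L ^^ Suc k) b) + b = (\<Sum>k<Suc n. (L ^^ k) b)"
      by (subst sum.lessThan_Suc_shift) (simp add: add.commute)
    finally show ?case .
  qed
  have projb: "proj S b = b + v"
  proof (rule proj_eq[OF convS closedS], (simp add: s0)[1], intro ballI)
    fix s assume s: "s \<in> S"
    have "inner (b - (b + v)) ((b + v) - s) = - (inner s0 v - inner s v)"
      using s0(2) by (simp add: inner_diff_right inner_commute)
    also have "\<dots> = 0" using FixS[OF vFix s0(1)] FixS[OF vFix s] by simp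
    finally show "dist b (b + v) \<le> dist b s" by (rule dist_le_of_orth)
  qed
  have iii: "(T ^^ n) x + real n *\<^sub>R v
            = (L ^^ n) x + (\<Sum>k<n. (L ^^ k) (proj (closure (range (\<lambda>y. y - L y))) b))" for n
  proof -
    have "(\<Sum>k<n. (L ^^ k) (proj (closure (range (\<lambda>y. y - L y))) b)) = (\<Sum>k<n. (L ^^ k) b + v)"
      using projb unfolding S_def Rg_def by (simp add: funpow_add_lin[OF lin] funpow_fix[of L v, OF Lv])
    also have "\<dots> = (\<Sum>k<n. (L ^^ k) b) + real n *\<^sub>R v"
      by (simp add: sum.distrib sum_constant_scale)
    finally show ?thesis using ii[of n] by simp
  qed
  have Tshift: "T (y + c *\<^sub>R v) = T y + c *\<^sub>R v" for y c
    by (simp add: T_def ladd lscale Lv)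
  have iv: "((\<lambda>y. T (y + v)) ^^ n) x = (T ^^ n) x + real n *\<^sub>R v" for n
  proof (induction n)
    case 0 show ?case by simp
  next
    case (Suc n)
    have "((\<lambda>y. T (y + v)) ^^ Suc n) x = T ((T ^^ n) x + (real n + 1) *\<^sub>R v)"
      using Suc by (simp add: algebra_simps)
    also have "\<dots> = (T ^^ Suc n) x + real (Suc n) *\<^sub>R v" by (simp add: Tshift)
    finally show ?case .
  qed
  have v5: "((\<lambda>y. v + T y) ^^ n) x = (T ^^ n) x + real n *\<^sub>R v" for n
  proof (induction n)
    case 0 show ?case by simp
  next
    case (Suc n)
    have "((\<lambda>y. v + T y) ^^ Suc n) x = v + T ((T ^^ n) x + real n *\<^sub>R v)"
      using Suc by simp
    also have "\<dots> = (T ^^ Suc n) x + real (Suc n) *\<^sub>R v" by (simp add: Tshift algebra_simps)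
    finally show ?case .
  qed
  define F where "F = Fix (\<lambda>y. v + T y)"
  have F12: "Fix (\<lambda>y. T (y + v)) = F"
    unfolding F_def Fix_def using Tshift[of _ 1] by (simp add: add.commute)
  have Finv: "y + t *\<^sub>R v \<in> F" if "y \<in> F" for y t
    using that unfolding F_def Fix_def by (simp add: Tshift algebra_simps)
  have Fimg: "(\<lambda>y. - v + y) ` F = F"
  proof
    show "(\<lambda>y. - v + y) ` F \<subseteq> F" using Finv[of _ "-1"] by (auto simp: add.commute)
    show "F \<subseteq> (\<lambda>y. - v + y) ` F"
    proof
      fix y assume "y \<in> F"
      hence "y + 1 *\<^sub>R v \<in> F" by (rule Finv)
      moreover have "y = - v + (y + 1 *\<^sub>R v)" by simp
      ultimately show "y \<in> (\<lambda>y. - v + y) ` F" by blast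
    qed
  qed
  have Fline: "{t *\<^sub>R v + y | t y. y \<in> F} = F"
  proof
    show "{t *\<^sub>R v + y | t y. y \<in> F} \<subseteq> F" using Finv by (auto simp: add.commute)
    show "F \<subseteq> {t *\<^sub>R v + y | t y. y \<in> F}"
    proof
      fix y assume "y \<in> F"
      moreover have "y = 0 *\<^sub>R v + y" by simp
      ultimately show "y \<in> {t *\<^sub>R v + y | t y. y \<in> F}" by blast
    qed
  qed
  have affF: "affine F"
    unfolding affine_def
  proof (intro ballI allI impI)
    fix y z and u w :: real assume y: "y \<in> F" and z: "z \<in> F" and uw: "u + w = 1"
    have "v + T (u *\<^sub>R y + w *\<^sub>R z) = u *\<^sub>R (v + T y) + w *\<^sub>R (v + T z)"
    proof -
      have "v + T (u *\<^sub>R y + w *\<^sub>R z) = (u + w) *\<^sub>R v + u *\<^sub>R L y + w *\<^sub>R L z + (u + w) *\<^sub>R b"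
        using uw by (simp add: T_def ladd lscale)
      thus ?thesis by (simp add: T_def algebra_simps)
    qed
    also have "\<dots> = u *\<^sub>R y + w *\<^sub>R z" using y z unfolding F_def Fix_def by simp
    finally show "u *\<^sub>R y + w *\<^sub>R z \<in> F" unfolding F_def Fix_def by simp
  qed
  have linF: "v \<in> lineality_space F"
  proof -
    have "{c + t *\<^sub>R v | c t. c \<in> F} = {t *\<^sub>R v + y | t y. y \<in> F}" by (auto simp: add.commute)
    thus ?thesis unfolding lineality_space_def using Fline by simp
  qed
  show ?thesis
    using i1 vFix FixL i4 ii iii iv v5 F12 Fimg Fline affF linF
    unfolding Rg_def F_def by (simp add: v5)
qed

end
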